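(* $\mathcal{S}^*[1-\alpha,0]\subset\mathcal{S}^*_{car}$ for all $\alpha\in[1/2,1)$, and $\mathcal{S}^*[\alpha,-\alpha]\subset\mathcal{S}^*_{car}$ for all $\alpha\in(0,1/3]$. In particular, if $f\in\mathcal{A}$ satisfies \[\left|\frac{zf'(z)}{f(z)}-1\right|<\frac12\quad\text{or}\quad\left|\frac{zf'(z)/f(z)-1}{zf'(z)/f(z)+1}\right|<\frac13\] for all $z\in\mathbb{D}$, then $f\in\mathcal{S}^*_{car}$.
   Context: $\mathbb{D}=\{z:|z|<1\}$; $\mathcal{A}$ is the class of analytic $f$ on $\mathbb{D}$ with $f(0)=0$, $f'(0)=1$. $F\prec G$ means $F=G\circ w$ for an analytic $w:\mathbb{D}\to\mathbb{D}$ with $w(0)=0$. $\mathcal{S}^*_{car}$ is the class of $f\in\mathcal{A}$ with $zf'(z)/f(z)\prec 1+z+z^2/2$; for $-1\le B<A\le1$, $\mathcal{S}^*[A,B]$ is the class of $f\in\mathcal{A}$ with $zf'(z)/f(z)\prec(1+Az)/(1+Bz)$. *)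

theory Defs
  imports "HOL-Complex_Analysis.Complex_Analysis"
begin

definition unit_disc :: "complex set" where
  "unit_disc = ball 0 1"

definition class_A :: "(complex \<Rightarrow> complex) set" where
  "class_A = {f. f holomorphic_on unit_disc \<and> f 0 = 0 \<and> deriv f 0 = 1}"

definition subordinate :: "(complex \<Rightarrow> complex) \<Rightarrow> (complex \<Rightarrow> complex) \<Rightarrow> bool" where
  "subordinate F G \<longleftrightarrow> (\<exists>w. w holomorphic_on unit_disc \<and> w ` unit_disc \<subseteq> unit_disc
      \<and> w 0 = 0 \<and> (\<forall>z\<in>unit_disc. F z = G (w z)))"

text \<open>The function z f'(z)/f(z), with its removable value 1 at z = 0
  (since f(0)=0, f'(0)=1).\<close>
definition zfq :: "(complex \<Rightarrow> complex) \<Rightarrow> complex \<Rightarrow> complex" where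
  "zfq f z = (if z = 0 then 1 else z * deriv f z / f z)"

definition S_car :: "(complex \<Rightarrow> complex) set" where
  "S_car = {f \<in> class_A. subordinate (zfq f) (\<lambda>z. 1 + z + z^2 / 2)}"

definition S_AB :: "real \<Rightarrow> real \<Rightarrow> (complex \<Rightarrow> complex) set" where
  "S_AB A B = {f \<in> class_A. subordinate (zfq f) (\<lambda>z. (1 + of_real A * z) / (1 + of_real B * z))}"

end

theory Submission
  imports Defs
begin

lemma cmod_lt_iff: "r > 0 \<Longrightarrow> cmod z < r \<longleftrightarrow> (Re z)^2 + (Im z)^2 < r^2"
  by (metis cmod_power2 norm_ge_zero power_less_imp_less_base power_strict_mono less_imp_le zero_less_numeral) 

lemma key_poly:
  fixes x y :: real
  assumes "x \<ge> 0" "((x^2 - y^2 + 1)/2 - 5/4)^2 + (x*y)^2 < 9/16"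
  shows "(x - 1)^2 + y^2 < 1"
proof -
  have e: "((x^2 - y^2 + 1)/2 - 5/4)^2 + (x*y)^2 - 9/16 = ((x^2+y^2)^2 - 3*(x^2-y^2))/4"
    by (simp add: power2_eq_square field_simps) 
  have "((x^2+y^2)^2 - 3*(x^2-y^2))/4 < 0" using assms(2) e by linarith
  hence "(x^2+y^2)^2 < 3*(x^2-y^2)" by simp
  also have "\<dots> \<le> 4*x^2" using zero_le_power2[of x] zero_le_power2[of y] by (simp add: algebra_simps)
  finally have "(x^2+y^2)^2 < (2*x)^2" by (simp add: power2_eq_square)
  hence "x^2+y^2 < 2*x" using assms(1) by (smt (verit) power_mono zero_le_power2 add_nonneg_nonneg)
  thus ?thesis by (simp add: power2_eq_square algebra_simps)
qed

lemma key_sqrt: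
  assumes "cmod (q - 5/4) < 3/4"
  shows "2*q - 1 \<notin> \<real>\<^sub>\<le>\<^sub>0" "cmod (csqrt (2*q-1) - 1) < 1"
proof -
  have h: "(Re q - 5/4)^2 + (Im q)^2 < (3/4)^2" using assms cmod_lt_iff[of "3/4" "q - 5/4"] by simp
  have "(Re q - 5/4)^2 < (3/4)^2" using h by (smt (verit) zero_le_power2)
  have "Re q > 1/2"
  proof (rule ccontr)
    assume "\<not> Re q > 1/2"
    hence "(3/4::real)^2 \<le> (5/4 - Re q)^2" by (intro power_mono) auto
    thus False using h by (smt (verit) power2_commute zero_le_power2)
  qed
  thus "2*q - 1 \<notin> \<real>\<^sub>\<le>\<^sub>0" by (auto simp: complex_nonpos_Reals_iff)
  define s where "s = csqrt (2*q-1)"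
  have ss: "s^2 = 2*q-1" by (simp add: s_def)
  hence qs: "q = (s^2+1)/2" by simp
  have e1: "Re q = ((Re s)^2 - (Im s)^2 + 1)/2" and e2: "Im q = Re s * Im s"
    using arg_cong[OF qs, of Re] arg_cong[OF qs, of Im] by (simp_all add: power2_eq_square)
  have n: "(3/4::real)^2 = 9/16" by (simp add: power2_eq_square)
  have "(((Re s)^2 - (Im s)^2 + 1)/2 - 5/4)^2 + (Re s * Im s)^2 < 9/16" using h unfolding e1 e2 n .
  from key_poly[OF Re_csqrt[of "2*q-1", folded s_def] this]
  show "cmod (s - 1) < 1" using cmod_lt_iff[of 1 "s - 1"] by simp
qed

lemma sub_car:
  assumes hol: "g holomorphic_on unit_disc" and g0: "g 0 = 1"
    and bd: "\<forall>z\<in>unit_disc. cmod (g z - 5/4) < 3/4"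
  shows "subordinate g (\<lambda>z. 1 + z + z^2/2)"
  unfolding subordinate_def
proof (intro exI[of _ "\<lambda>z. csqrt (2 * g z - 1) - 1"] conjI ballI)
  show "(\<lambda>z. csqrt (2 * g z - 1) - 1) holomorphic_on unit_disc"
    using key_sqrt(1) bd by (intro holomorphic_intros hol) auto
  show "(\<lambda>z. csqrt (2 * g z - 1) - 1) ` unit_disc \<subseteq> unit_disc"
    using key_sqrt(2) bd by (auto simp: unit_disc_def)
  show "csqrt (2 * g 0 - 1) - 1 = 0" using g0 by simp
  fix z assume "z \<in> unit_disc"
  define s where "s = csqrt (2 * g z - 1)"
  have "s^2 = 2 * g z - 1" by (simp add: s_def)
  moreover have "1 + (s - 1) + (s - 1)^2/2 = (s^2 + 1)/2" by (simp add: field_simps power2_eq_square)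
  ultimately show "g z = 1 + (s - 1) + (s - 1)^2/2" by simp
qed

lemma S_sub:
  assumes "f \<in> class_A" "zfq f holomorphic_on unit_disc"
    "\<forall>z\<in>unit_disc. cmod (zfq f z - 5/4) < 3/4"
  shows "f \<in> S_car"
  using assms sub_car[of "zfq f"] unfolding S_car_def by (auto simp: zfq_def)

lemma open_disc: "open unit_disc" by (simp add: unit_disc_def)
lemma zero_disc: "0 \<in> unit_disc" by (simp add: unit_disc_def)

lemma zfq_hol:
  assumes A: "f \<in> class_A" and nz: "\<forall>z\<in>unit_disc - {0}. f z \<noteq> 0"
  shows "zfq f holomorphic_on unit_disc"
proof (rule no_isolated_singularity'[where K="{0}"])
  have hf: "f holomorphic_on unit_disc" and f0: "f 0 = 0" and d0: "deriv f 0 = 1"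
    using A by (auto simp: class_A_def)
  have "(\<lambda>z. z * deriv f z / f z) holomorphic_on (unit_disc - {0})"
    using nz by (intro holomorphic_intros holomorphic_on_subset[OF hf] holomorphic_on_subset[OF holomorphic_deriv[OF hf open_disc]]) auto
  thus "zfq f holomorphic_on (unit_disc - {0})"
    by (rule holomorphic_transform) (auto simp: zfq_def)
  have "f field_differentiable (at 0)"
    using holomorphic_on_imp_differentiable_at[OF hf open_disc zero_disc] .
  hence "(f has_field_derivative 1) (at 0)" using d0 DERIV_deriv_iff_field_differentiable by metis
  hence l1: "((\<lambda>y. f y / y) \<longlongrightarrow> 1) (at 0)" using f0 by (simp add: has_field_derivative_iff)
  have "continuous_on unit_disc (deriv f)"
    by (rule holomorphic_on_imp_continuous_on[OF holomorphic_deriv[OF hf open_disc]])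
  hence "isCont (deriv f) 0" using continuous_on_eq_continuous_at[OF open_disc] zero_disc by blast
  hence l2: "(deriv f \<longlongrightarrow> 1) (at 0)" using d0 isCont_def by metis
  have "((\<lambda>z. deriv f z / (f z / z)) \<longlongrightarrow> 1 / 1) (at 0)"
    by (rule tendsto_divide[OF l2 l1]) simp
  moreover have "\<forall>\<^sub>F z in at 0. deriv f z / (f z / z) = zfq f z"
    by (auto simp: eventually_at_filter zfq_def)
  ultimately have "(zfq f \<longlongrightarrow> 1) (at 0)" by (simp add: tendsto_cong)
  then show "\<And>z. z \<in> {0} \<Longrightarrow> (zfq f \<longlongrightarrow> zfq f z) (at z within unit_disc)"
    by (auto simp: zfq_def intro: tendsto_within_subset)
qed (auto simp: open_disc)

lemma moeb_bound:
  assumes "cmod u < 1/3"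
  shows "cmod ((1 + u)/(1 - u) - 5/4) < 3/4"
proof -
  have nz: "1 - u \<noteq> 0" using assms by auto
  have e: "(1 + u)/(1 - u) - 5/4 = (9*u - 1)/(4*(1 - u))" using nz by (simp add: field_simps)
  have "(Re u)^2 + (Im u)^2 < (1/3)^2" using assms cmod_lt_iff[of "1/3" u] by simp
  hence "(9*Re u - 1)^2 + (9*Im u)^2 < 9*((1 - Re u)^2 + (Im u)^2)"
    by (simp add: power2_eq_square algebra_simps)
  hence "(cmod (9*u - 1))^2 < (3 * cmod (1 - u))^2"
    by (simp add: cmod_power2 power_mult_distrib)
  hence "cmod (9*u - 1) < 3 * cmod (1 - u)"
    by (rule power_less_imp_less_base) simp
  hence "cmod (9*u - 1) / (4 * cmod (1 - u)) < 3/4" using nz by (simp add: divide_simps)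
  moreover have "cmod ((9*u - 1)/(4*(1 - u))) = cmod (9*u - 1) / (4 * cmod (1 - u))"
    by (simp only: norm_divide norm_mult) simp
  ultimately show ?thesis unfolding e by simp
qed

lemma part1:
  assumes "1/2 \<le> \<alpha>" "\<alpha> < 1" "f \<in> S_AB (1 - \<alpha>) 0"
  shows "f \<in> S_car"
proof -
  from assms(3) obtain w where A: "f \<in> class_A" and hw: "w holomorphic_on unit_disc"
    and wD: "w ` unit_disc \<subseteq> unit_disc"
    and eq: "\<forall>z\<in>unit_disc. zfq f z = (1 + of_real (1 - \<alpha>) * w z) / (1 + of_real 0 * w z)"
    unfolding S_AB_def subordinate_def by blast
  have eq': "\<forall>z\<in>unit_disc. zfq f z = 1 + of_real (1 - \<alpha>) * w z" using eq by simp
  show ?thesis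
  proof (rule S_sub[OF A])
    have "(\<lambda>z. 1 + of_real (1 - \<alpha>) * w z) holomorphic_on unit_disc"
      by (intro holomorphic_intros hw)
    thus "zfq f holomorphic_on unit_disc"
      by (rule holomorphic_transform) (use eq' in auto)
    show "\<forall>z\<in>unit_disc. cmod (zfq f z - 5/4) < 3/4"
    proof
      fix z assume z: "z \<in> unit_disc"
      have "w z \<in> ball 0 1" using wD z unfolding unit_disc_def by blast
      hence "cmod (w z) < 1" by simp
      hence "(1 - \<alpha>) * cmod (w z) < (1 - \<alpha>) * 1" using assms(2) by (intro mult_strict_left_mono) auto
      hence "(1 - \<alpha>) * cmod (w z) < 1 - \<alpha>" by simp
      hence "(1 - \<alpha>) * cmod (w z) < 1/2" using assms(1) by linarith
      moreover have "cmod (of_real (1 - \<alpha>) * w z) = (1 - \<alpha>) * cmod (w z)"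
        using assms(2) by (simp only: norm_mult norm_of_real)
      ultimately have "cmod (of_real (1 - \<alpha>) * w z) < 1/2" by simp
      moreover have "zfq f z - 5/4 = of_real (1 - \<alpha>) * w z - 1/4" using eq' z by simp
      moreover have "cmod (of_real (1 - \<alpha>) * w z - 1/4) \<le> cmod (of_real (1 - \<alpha>) * w z) + 1/4"
        using norm_triangle_ineq4[of "of_real (1 - \<alpha>) * w z" "1/4"] by simp
      ultimately show "cmod (zfq f z - 5/4) < 3/4" by simp
    qed
  qed
qed

lemma part2:
  assumes "0 < \<alpha>" "\<alpha> \<le> 1/3" "f \<in> S_AB \<alpha> (-\<alpha>)"
  shows "f \<in> S_car"
proof -
  from assms(3) obtain w where A: "f \<in> class_A" and hw: "w holomorphic_on unit_disc"
    and wD: "w ` unit_disc \<subseteq> unit_disc"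
    and eq: "\<forall>z\<in>unit_disc. zfq f z = (1 + of_real \<alpha> * w z) / (1 + of_real (-\<alpha>) * w z)"
    unfolding S_AB_def subordinate_def by blast
  have small: "cmod (of_real \<alpha> * w z) < 1/3" if z: "z \<in> unit_disc" for z
  proof -
    have "w z \<in> ball 0 1" using wD z unfolding unit_disc_def by blast
    hence "cmod (w z) < 1" by simp
    hence "\<alpha> * cmod (w z) < \<alpha> * 1" using assms(1) by (intro mult_strict_left_mono) auto
    hence "\<alpha> * cmod (w z) < \<alpha>" by simp
    hence "\<alpha> * cmod (w z) < 1/3" using assms(2) by linarith
    moreover have "cmod (of_real \<alpha> * w z) = \<alpha> * cmod (w z)"
      using assms(1) by (simp add: norm_mult)
    ultimately show ?thesis by simp
  qed
  have eq': "\<forall>z\<in>unit_disc. zfq f z = (1 + of_real \<alpha> * w z) / (1 - of_real \<alpha> * w z)" using eq by simp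
  show ?thesis
  proof (rule S_sub[OF A])
    have "(\<lambda>z. (1 + of_real \<alpha> * w z) / (1 - of_real \<alpha> * w z)) holomorphic_on unit_disc"
    proof (intro holomorphic_intros hw)
      fix z assume "z \<in> unit_disc"
      from small[OF this] show "1 - of_real \<alpha> * w z \<noteq> 0" by auto
    qed
    thus "zfq f holomorphic_on unit_disc"
      by (rule holomorphic_transform) (use eq' in auto)
    show "\<forall>z\<in>unit_disc. cmod (zfq f z - 5/4) < 3/4"
    proof
      fix z assume z: "z \<in> unit_disc"
      have "cmod ((1 + of_real \<alpha> * w z) / (1 - of_real \<alpha> * w z) - 5/4) < 3/4"
        by (rule moeb_bound[OF small[OF z]])
      thus "cmod (zfq f z - 5/4) < 3/4" using eq' z by simp
    qed
  qed
qed

lemma part3: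
  assumes A: "f \<in> class_A"
    and c: "(\<forall>z\<in>unit_disc. cmod (zfq f z - 1) < 1/2)
           \<or> (\<forall>z\<in>unit_disc. cmod ((zfq f z - 1) / (zfq f z + 1)) < 1/3)"
  shows "f \<in> S_car"
proof -
  have nz: "\<forall>z\<in>unit_disc - {0}. f z \<noteq> 0"
  proof
    fix z assume z: "z \<in> unit_disc - {0}"
    show "f z \<noteq> 0"
    proof
      assume "f z = 0"
      moreover have "z \<noteq> 0" using z by simp
      ultimately have "zfq f z = 0" by (simp add: zfq_def)
      moreover have "cmod (zfq f z - 1) < 1/2 \<or> cmod ((zfq f z - 1) / (zfq f z + 1)) < 1/3"
        using c z by blast
      ultimately show False by simp
    qed
  qed
  have hol: "zfq f holomorphic_on unit_disc" by (rule zfq_hol[OF A nz])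
  show ?thesis
  proof (rule S_sub[OF A hol])
    from c show "\<forall>z\<in>unit_disc. cmod (zfq f z - 5/4) < 3/4"
    proof
      assume c1: "\<forall>z\<in>unit_disc. cmod (zfq f z - 1) < 1/2"
      show ?thesis
      proof
        fix z assume "z \<in> unit_disc"
        with c1 have "cmod (zfq f z - 1) < 1/2" by blast
        moreover have "cmod (zfq f z - 5/4) \<le> cmod (zfq f z - 1) + 1/4"
          using norm_triangle_ineq4[of "zfq f z - 1" "1/4"] by (simp add: algebra_simps)
        ultimately show "cmod (zfq f z - 5/4) < 3/4" by simp
      qed
    next
      assume c2: "\<forall>z\<in>unit_disc. cmod ((zfq f z - 1) / (zfq f z + 1)) < 1/3"
      have nm1: False if z0: "z0 \<in> unit_disc" "zfq f z0 = -1" for z0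
      proof -
        define h where "h = (\<lambda>z. cmod (zfq f z + 1))"
        have "continuous_on unit_disc h" unfolding h_def
          by (intro continuous_intros holomorphic_on_imp_continuous_on[OF hol])
        hence conn: "connected (h ` unit_disc)"
          by (rule connected_continuous_image) (simp add: unit_disc_def)
        have "h z0 = 0" using z0(2) by (simp add: h_def)
        hence i0: "0 \<in> h ` unit_disc" using rev_image_eqI[OF z0(1)] by metis
        have "h 0 = 2" by (simp add: h_def zfq_def)
        hence i2: "2 \<in> h ` unit_disc" using rev_image_eqI[OF zero_disc] by metis
        have "1 \<in> h ` unit_disc"
          by (rule connectedD_interval[OF conn i0 i2]) simp_all
        then obtain z1 where z1: "z1 \<in> unit_disc" "1 = h z1" by (rule imageE)
        hence z1: "z1 \<in> unit_disc" "cmod (zfq f z1 + 1) = 1" by (simp_all add: h_def)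
        have "cmod ((zfq f z1 - 1) / (zfq f z1 + 1)) < 1/3" using c2 z1(1) by blast
        hence "cmod (zfq f z1 - 1) < 1/3" using z1(2) by (simp add: norm_divide)
        moreover have "2 \<le> cmod (zfq f z1 + 1) + cmod (zfq f z1 - 1)"
          using norm_triangle_ineq4[of "zfq f z1 + 1" "zfq f z1 - 1"] by simp
        ultimately show False using z1(2) by simp
      qed
      show ?thesis
      proof
        fix z assume z: "z \<in> unit_disc"
        define q where "q = zfq f z"
        define u where "u = (q - 1)/(q + 1)"
        have "q \<noteq> -1" using nm1 z unfolding q_def by blast
        hence q1: "q + 1 \<noteq> 0" by (simp add: add_eq_0_iff2)
        have a1: "1 + u = 2*q/(q+1)" and a2: "1 - u = 2/(q+1)" using q1 unfolding u_def by (simp_all add: field_simps)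
        have nz2: "2/(q+1) \<noteq> 0" using q1 by simp
        have "2*q/(q+1) = q * (2/(q+1))" by simp
        hence qu: "q = (1 + u)/(1 - u)" unfolding a1 a2 using nz2 by simp
        have "cmod u < 1/3" using c2 z unfolding u_def q_def by blast
        hence "cmod ((1 + u)/(1 - u) - 5/4) < 3/4" by (rule moeb_bound)
        thus "cmod (zfq f z - 5/4) < 3/4" unfolding q_def[symmetric] qu .
      qed
    qed
  qed
qed

theorem corollary3p2:
  shows "(\<forall>\<alpha>::real. 1/2 \<le> \<alpha> \<and> \<alpha> < 1 \<longrightarrow> S_AB (1 - \<alpha>) 0 \<subseteq> S_car)
    \<and> (\<forall>\<alpha>::real. 0 < \<alpha> \<and> \<alpha> \<le> 1/3 \<longrightarrow> S_AB \<alpha> (-\<alpha>) \<subseteq> S_car)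
    \<and> (\<forall>f \<in> class_A.
          ((\<forall>z\<in>unit_disc. cmod (zfq f z - 1) < 1/2)
           \<or> (\<forall>z\<in>unit_disc. cmod ((zfq f z - 1) / (zfq f z + 1)) < 1/3))
          \<longrightarrow> f \<in> S_car)"
  using part1 part2 part3 by blast

end
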